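(* Let $m\ge 2$ be an integer and consider the system $$\frac{du_i}{dt}=-a_iu_i+\sum_{j=1}^m w_{ij}f_j(u_j)+k\,\varphi_i(\rho)\,u_i+J_i-P\,u_i\sum_{j=1}^m\Gamma(u_j),\quad 1\le i\le m,\qquad \frac{d\rho}{dt}=\sum_{i=1}^m\gamma_iu_i-b\rho,\quad t>0,$$ with initial data $u_i(0)=u_i^0$, $\rho(0)=\rho^0$, where $\Gamma(s)=\dfrac{1}{1+\exp[-r(s-V)]}$ with $r>0$, $V\in\mathbb{R}$, and $P>0$. Assume $a_i,b,\beta,\eta_i,k$ are positive constants, $w_{ij},J_i,\gamma_i$ are real constants, the functions $f_i,\varphi_i:\mathbb{R}\to\mathbb{R}$ are locally Lipschitz continuous, and for all $s\in\mathbb{R}$ and $1\le i\le m$: $a_i>k$, $|f_i(s)|\le\beta$, and $\varphi_i(s)=1-\eta_is^2$. Then for every initial state $g^0=(u_1^0,\dots,u_m^0,\rho^0)\in\mathbb{R}^{m+1}$ there exists a unique global solution $g(t;g^0)=(u_1(t),\dots,u_m(t),\rho(t))$ defined for all $t\in[0,\infty)$. *)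

theory Defs
  imports "HOL-Analysis.Analysis"
begin

definition locally_lipschitz_real :: "(real \<Rightarrow> real) \<Rightarrow> bool" where
  "locally_lipschitz_real g \<longleftrightarrow> (\<forall>x. \<exists>e>0. \<exists>L. L-lipschitz_on (cball x e) g)"

definition Gam :: "real \<Rightarrow> real \<Rightarrow> real \<Rightarrow> real" where
  "Gam r V s = 1 / (1 + exp (- r * (s - V)))"

definition is_global_solution ::
  "('n::finite \<Rightarrow> real) \<Rightarrow> ('n \<Rightarrow> 'n \<Rightarrow> real) \<Rightarrow> ('n \<Rightarrow> real \<Rightarrow> real) \<Rightarrow> real
   \<Rightarrow> ('n \<Rightarrow> real \<Rightarrow> real) \<Rightarrow> ('n \<Rightarrow> real) \<Rightarrow> real \<Rightarrow> real \<Rightarrow> real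
   \<Rightarrow> ('n \<Rightarrow> real) \<Rightarrow> real
   \<Rightarrow> ('n \<Rightarrow> real) \<Rightarrow> real
   \<Rightarrow> (real \<Rightarrow> 'n \<Rightarrow> real) \<Rightarrow> (real \<Rightarrow> real) \<Rightarrow> bool" where
  "is_global_solution a w f k \<phi> J P r V \<gamma> b u0 \<rho>0 u \<rho> \<longleftrightarrow>
     (\<forall>i. continuous_on {0..} (\<lambda>t. u t i)) \<and> continuous_on {0..} \<rho> \<and>
     u 0 = u0 \<and> \<rho> 0 = \<rho>0 \<and>
     (\<forall>t>0. \<forall>i. ((\<lambda>s. u s i) has_real_derivative
         (- a i * u t i + (\<Sum>j\<in>UNIV. w i j * f j (u t j)) + k * \<phi> i (\<rho> t) * u t i + J i
          - P * u t i * (\<Sum>j\<in>UNIV. Gam r V (u t j)))) (at t)) \<and>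
     (\<forall>t>0. (\<rho> has_real_derivative ((\<Sum>i\<in>UNIV. \<gamma> i * u t i) - b * \<rho> t)) (at t))"

end

theory Submission
  imports Defs
begin



lemma gam_lip:
  assumes r: "r > 0"
  shows "\<bar>Gam r V s - Gam r V s'\<bar> \<le> r * \<bar>s - s'\<bar>"
proof -
  have D: "DERIV (Gam r V) x :> r * exp (- r * (x - V)) / (1 + exp (- r * (x - V)))^2" for x
  proof -
    have "1 + exp (- r * (x - V)) \<noteq> 0" by (smt (verit) exp_gt_zero)
    then show ?thesis unfolding Gam_def[abs_def]
      by (auto intro!: derivative_eq_intros simp: power2_eq_square field_simps)
  qed
  have bd: "\<bar>r * exp (- r * (x - V)) / (1 + exp (- r * (x - V)))^2\<bar> \<le> r" for x
  proof -
    define e where "e = exp (- r * (x - V))"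
    have e: "e > 0" unfolding e_def by simp
    have p: "(1 + e)^2 > 0" using e by simp
    have "e \<le> (1 + e)^2" using e by (simp add: power2_eq_square algebra_simps)
    then have "e / (1 + e)^2 \<le> 1" using p by (simp add: pos_divide_le_eq)
    then have "r * (e / (1+e)^2) \<le> r * 1" using r by (intro mult_left_mono) auto
    moreover have "r * e / (1+e)^2 \<ge> 0" using e r by simp
    ultimately show ?thesis unfolding e_def[symmetric] by simp
  qed
  have main: "\<bar>Gam r V b - Gam r V a\<bar> \<le> r * \<bar>b - a\<bar>" if ab: "a < b" for a b
  proof -
    obtain z where "Gam r V b - Gam r V a = (b - a) * (r * exp (- r * (z - V)) / (1 + exp (- r * (z - V)))^2)"
      using MVT2[OF ab, of "Gam r V" "\<lambda>x. r * exp (- r * (x - V)) / (1 + exp (- r * (x - V)))^2"] D by blast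
    then have "\<bar>Gam r V b - Gam r V a\<bar> = \<bar>b - a\<bar> * \<bar>r * exp (- r * (z - V)) / (1 + exp (- r * (z - V)))^2\<bar>"
      by (simp add: abs_mult)
    also have "\<dots> \<le> \<bar>b - a\<bar> * r" using bd[of z] by (intro mult_left_mono) auto
    finally show ?thesis by (simp add: mult.commute)
  qed
  show ?thesis
    using main[of s s'] main[of s' s] by (cases "s < s'"; cases "s' < s") (auto simp: abs_minus_commute)
qed

lemma llr_lip:
  assumes "locally_lipschitz_real g"
  shows "\<exists>L. \<forall>s s'. \<bar>s\<bar> \<le> C \<longrightarrow> \<bar>s'\<bar> \<le> C \<longrightarrow> \<bar>g s - g s'\<bar> \<le> L * \<bar>s - s'\<bar>"
proof -
  have ll: "local_lipschitz {0::real} {-C..C} (\<lambda>_. g)"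
  proof (rule local_lipschitzI)
    fix t x assume "t \<in> {0::real}" "x \<in> {-C..C}"
    obtain e L where e: "e > 0" "L-lipschitz_on (cball x e) g"
      using assms unfolding locally_lipschitz_real_def by blast
    then show "\<exists>u>0. \<exists>L. \<forall>t\<in>cball t u \<inter> {0}. L-lipschitz_on (cball x u \<inter> {-C..C}) g"
      by (meson inf_le1 lipschitz_on_subset)
  qed
  obtain L where L: "\<And>t. t \<in> {0::real} \<Longrightarrow> L-lipschitz_on {-C..C} g"
    by (rule local_lipschitz_compact_implies_lipschitz[OF ll]) auto
  show ?thesis
  proof (intro exI allI impI)
    fix s s' :: real assume "\<bar>s\<bar> \<le> C" "\<bar>s'\<bar> \<le> C"
    then have "s \<in> {-C..C}" "s' \<in> {-C..C}" by auto
    from lipschitz_onD[OF L[of 0] this] show "\<bar>g s - g s'\<bar> \<le> L * \<bar>s - s'\<bar>"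
      by (simp add: dist_real_def)
  qed
qed

definition dd :: "('i::finite \<Rightarrow> real) \<Rightarrow> ('i \<Rightarrow> real) \<Rightarrow> real" where
  "dd y y' = (\<Sum>j\<in>UNIV. \<bar>y j - y' j\<bar>)"

lemma dd_ge: "\<bar>y j - y' j\<bar> \<le> dd y y'"
  unfolding dd_def by (rule member_le_sum) auto

lemma dd_nonneg: "0 \<le> dd y y'"
  unfolding dd_def by (rule sum_nonneg) auto

definition lipb :: "real \<Rightarrow> (('i::finite \<Rightarrow> real) \<Rightarrow> real) \<Rightarrow> bool" where
  "lipb C h \<longleftrightarrow> (\<exists>B L. \<forall>y y'. (\<forall>j. \<bar>y j\<bar> \<le> C) \<longrightarrow> (\<forall>j. \<bar>y' j\<bar> \<le> C) \<longrightarrow>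
      \<bar>h y\<bar> \<le> B \<and> \<bar>h y - h y'\<bar> \<le> L * dd y y')"

lemma lipb_const: "lipb C (\<lambda>y. c)"
  unfolding lipb_def by (rule exI[of _ "\<bar>c\<bar>"], rule exI[of _ 0]) simp

lemma lipb_proj: "lipb C (\<lambda>y. y j)"
  unfolding lipb_def by (rule exI[of _ C], rule exI[of _ 1]) (auto simp: dd_ge)

lemma lipb_add:
  assumes "lipb C h1" "lipb C h2" shows "lipb C (\<lambda>y. h1 y + h2 y)"
proof -
  obtain B1 L1 where 1: "\<And>y y'. (\<forall>j. \<bar>y j\<bar> \<le> C) \<Longrightarrow> (\<forall>j. \<bar>y' j\<bar> \<le> C) \<Longrightarrow>
      \<bar>h1 y\<bar> \<le> B1 \<and> \<bar>h1 y - h1 y'\<bar> \<le> L1 * dd y y'" using assms(1) unfolding lipb_def by blast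
  obtain B2 L2 where 2: "\<And>y y'. (\<forall>j. \<bar>y j\<bar> \<le> C) \<Longrightarrow> (\<forall>j. \<bar>y' j\<bar> \<le> C) \<Longrightarrow>
      \<bar>h2 y\<bar> \<le> B2 \<and> \<bar>h2 y - h2 y'\<bar> \<le> L2 * dd y y'" using assms(2) unfolding lipb_def by blast
  show ?thesis unfolding lipb_def
  proof (intro exI allI impI)
    fix y y' :: "'a \<Rightarrow> real" assume y: "\<forall>j. \<bar>y j\<bar> \<le> C" and y': "\<forall>j. \<bar>y' j\<bar> \<le> C"
    from 1[OF y y'] 2[OF y y'] show "\<bar>h1 y + h2 y\<bar> \<le> B1 + B2 \<and> \<bar>h1 y + h2 y - (h1 y' + h2 y')\<bar> \<le> (L1 + L2) * dd y y'"
      by (auto simp: algebra_simps)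
  qed
qed

lemma lipb_neg:
  assumes "lipb C h" shows "lipb C (\<lambda>y. - h y)"
  using assms unfolding lipb_def by (auto simp: abs_minus_commute)

lemma lipb_diff:
  assumes "lipb C h1" "lipb C h2" shows "lipb C (\<lambda>y. h1 y - h2 y)"
  using lipb_add[OF assms(1) lipb_neg[OF assms(2)]] by simp

lemma lipb_mult:
  assumes "lipb C h1" "lipb C h2" shows "lipb C (\<lambda>y. h1 y * h2 y)"
proof -
  obtain B1 L1 where 1: "\<And>y y'. (\<forall>j. \<bar>y j\<bar> \<le> C) \<Longrightarrow> (\<forall>j. \<bar>y' j\<bar> \<le> C) \<Longrightarrow>
      \<bar>h1 y\<bar> \<le> B1 \<and> \<bar>h1 y - h1 y'\<bar> \<le> L1 * dd y y'" using assms(1) unfolding lipb_def by blast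
  obtain B2 L2 where 2: "\<And>y y'. (\<forall>j. \<bar>y j\<bar> \<le> C) \<Longrightarrow> (\<forall>j. \<bar>y' j\<bar> \<le> C) \<Longrightarrow>
      \<bar>h2 y\<bar> \<le> B2 \<and> \<bar>h2 y - h2 y'\<bar> \<le> L2 * dd y y'" using assms(2) unfolding lipb_def by blast
  show ?thesis unfolding lipb_def
  proof (intro exI allI impI)
    fix y y' :: "'a \<Rightarrow> real" assume y: "\<forall>j. \<bar>y j\<bar> \<le> C" and y': "\<forall>j. \<bar>y' j\<bar> \<le> C"
    have a1: "\<bar>h1 y\<bar> \<le> B1" "\<bar>h1 y - h1 y'\<bar> \<le> L1 * dd y y'" using 1[OF y y'] by auto
    have a2: "\<bar>h2 y\<bar> \<le> B2" "\<bar>h2 y - h2 y'\<bar> \<le> L2 * dd y y'" using 2[OF y y'] by auto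
    have b2: "\<bar>h2 y'\<bar> \<le> B2" using 2[OF y' y] by auto
    have "\<bar>h1 y * h2 y\<bar> = \<bar>h1 y\<bar> * \<bar>h2 y\<bar>" by (simp add: abs_mult)
    also have "\<dots> \<le> B1 * B2" using a1 a2 by (intro mult_mono) auto
    finally have r1: "\<bar>h1 y * h2 y\<bar> \<le> B1 * B2" .
    have "h1 y * h2 y - h1 y' * h2 y' = h1 y * (h2 y - h2 y') + h2 y' * (h1 y - h1 y')"
      by (simp add: algebra_simps)
    then have "\<bar>h1 y * h2 y - h1 y' * h2 y'\<bar> \<le> \<bar>h1 y\<bar> * \<bar>h2 y - h2 y'\<bar> + \<bar>h2 y'\<bar> * \<bar>h1 y - h1 y'\<bar>"
      by (simp add: abs_mult[symmetric] abs_triangle_ineq)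
    also have "\<dots> \<le> B1 * (L2 * dd y y') + B2 * (L1 * dd y y')"
      using a1 a2 b2 by (intro add_mono mult_mono) auto
    finally show "\<bar>h1 y * h2 y\<bar> \<le> B1 * B2 \<and> \<bar>h1 y * h2 y - h1 y' * h2 y'\<bar> \<le> (B1 * L2 + B2 * L1) * dd y y'"
      using r1 by (simp add: algebra_simps)
  qed
qed

lemma lipb_sum:
  assumes "finite A" "\<And>a. a \<in> A \<Longrightarrow> lipb C (h a)" shows "lipb C (\<lambda>y. \<Sum>a\<in>A. h a y)"
  using assms by (induction A rule: finite_induct) (auto intro: lipb_add lipb_const)

lemma lipb_comp:
  assumes "\<exists>L. \<forall>s s'. \<bar>s\<bar> \<le> C \<longrightarrow> \<bar>s'\<bar> \<le> C \<longrightarrow> \<bar>g s - g s'\<bar> \<le> L * \<bar>s - s'\<bar>"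
  shows "lipb C (\<lambda>y. g (y j))"
proof -
  obtain L where L: "\<And>s s'. \<bar>s\<bar> \<le> C \<Longrightarrow> \<bar>s'\<bar> \<le> C \<Longrightarrow> \<bar>g s - g s'\<bar> \<le> L * \<bar>s - s'\<bar>"
    using assms by blast
  show ?thesis unfolding lipb_def
  proof (intro exI allI impI)
    fix y y' :: "'a \<Rightarrow> real" assume y: "\<forall>j. \<bar>y j\<bar> \<le> C" and y': "\<forall>j. \<bar>y' j\<bar> \<le> C"
    have C0: "0 \<le> C" using y by (meson abs_ge_zero order_trans)
    have "\<bar>g (y j) - g 0\<bar> \<le> L * \<bar>y j - 0\<bar>" using L[of "y j" 0] y C0 by simp
    also have "\<dots> \<le> max L 0 * C" using y by (intro mult_mono) auto
    finally have r1: "\<bar>g (y j)\<bar> \<le> \<bar>g 0\<bar> + max L 0 * C" by linarith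
    have "\<bar>g (y j) - g (y' j)\<bar> \<le> L * \<bar>y j - y' j\<bar>" using L y y' by simp
    also have "\<dots> \<le> max L 0 * \<bar>y j - y' j\<bar>" by (intro mult_right_mono) auto
    also have "\<dots> \<le> max L 0 * dd y y'" by (intro mult_left_mono dd_ge) auto
    finally show "\<bar>g (y j)\<bar> \<le> \<bar>g 0\<bar> + max L 0 * C \<and> \<bar>g (y j) - g (y' j)\<bar> \<le> max L 0 * dd y y'"
      using r1 by simp
  qed
qed

lemma lipt_cont:
  fixes y :: "real \<Rightarrow> real"
  assumes "\<And>s t. 0 \<le> s \<Longrightarrow> s \<le> t \<Longrightarrow> \<bar>y t - y s\<bar> \<le> K * (t - s)"
  shows "continuous_on {0..} y"
proof -
  have "(max K 0)-lipschitz_on {0..} y"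
  proof (rule lipschitz_onI)
    fix s t :: real assume st: "s \<in> {0..}" "t \<in> {0..}"
    have "\<bar>y t - y s\<bar> \<le> max K 0 * \<bar>t - s\<bar>" if "s \<le> t" "0 \<le> s" for s t
    proof -
      have "\<bar>y t - y s\<bar> \<le> K * (t - s)" using assms that by blast
      also have "\<dots> \<le> max K 0 * (t - s)" using that by (intro mult_right_mono) auto
      finally show ?thesis using that by simp
    qed
    from this[of s t] this[of t s] st show "dist (y s) (y t) \<le> max K 0 * dist s t"
      by (cases "s \<le> t") (auto simp: dist_real_def abs_minus_commute)
  qed auto
  then show ?thesis by (rule lipschitz_on_continuous_on)
qed

lemma poly_int:
  assumes "0 \<le> t"
  shows "((\<lambda>s. c * s ^ k) has_integral (c / real (Suc k) * t ^ Suc k)) {0..t}"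
proof -
  have "((\<lambda>s. c * s ^ k) has_integral ((\<lambda>s. c / real (Suc k) * s ^ Suc k) t - (\<lambda>s. c / real (Suc k) * s ^ Suc k) 0)) {0..t}"
  proof (rule fundamental_theorem_of_calculus[OF assms])
    fix x :: real assume "x \<in> {0..t}"
    have d: "((\<lambda>s. s ^ Suc k) has_real_derivative real (Suc k) * x ^ k) (at x within {0..t})"
      using DERIV_pow[of "Suc k" x] by (simp add: has_field_derivative_at_within)
    have "((\<lambda>s. c / real (Suc k) * s ^ Suc k) has_real_derivative c / real (Suc k) * (real (Suc k) * x ^ k)) (at x within {0..t})"
      by (rule DERIV_cmult[OF d])
    moreover have "c / real (Suc k) * (real (Suc k) * x ^ k) = c * x ^ k"
      by (simp del: of_nat_Suc)
    ultimately show "((\<lambda>s. c / real (Suc k) * s ^ Suc k) has_vector_derivative c * x ^ k) (at x within {0..t})"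
      by (simp add: has_real_derivative_iff_has_vector_derivative)
  qed
  then show ?thesis by simp
qed

lemma int_abs_le:
  fixes f g :: "real \<Rightarrow> real"
  assumes "f integrable_on {a..b}" "g integrable_on {a..b}" "\<And>x. x \<in> {a..b} \<Longrightarrow> \<bar>f x\<bar> \<le> g x"
  shows "\<bar>integral {a..b} f\<bar> \<le> integral {a..b} g"
  using Henstock_Kurzweil_Integration.integral_norm_bound_integral[OF assms(1,2)] assms(3) by auto

primrec pic :: "(('i::finite \<Rightarrow> real) \<Rightarrow> 'i \<Rightarrow> real) \<Rightarrow> ('i \<Rightarrow> real) \<Rightarrow> nat \<Rightarrow> real \<Rightarrow> 'i \<Rightarrow> real" where
  "pic G z0 0 = (\<lambda>t. z0)"
| "pic G z0 (Suc n) = (\<lambda>t j. z0 j + integral {0..t} (\<lambda>s. G (pic G z0 n s) j))"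

locale pic_loc =
  fixes G :: "('i::finite \<Rightarrow> real) \<Rightarrow> 'i \<Rightarrow> real" and B L :: real and z0 :: "'i \<Rightarrow> real"
  assumes Gb: "\<And>z i. \<bar>G z i\<bar> \<le> B"
    and Gl: "\<And>z z' i. \<bar>G z i - G z' i\<bar> \<le> L * dd z z'"
    and Lpos: "L > 0"
begin

definition N :: real where "N = real CARD('i)"

lemma N_pos: "N > 0" unfolding N_def by simp

lemma B_nonneg: "0 \<le> B" using Gb[of z0 undefined] by (meson abs_ge_zero order_trans)

lemma dd_const:
  fixes y y' :: "'i \<Rightarrow> real"
  assumes "\<And>j. \<bar>y j - y' j\<bar> \<le> c" shows "dd y y' \<le> N * c"
proof -
  have "dd y y' \<le> (\<Sum>j\<in>(UNIV::'i set). c)" unfolding dd_def by (rule sum_mono) (use assms in auto)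
  also have "\<dots> = N * c" by (simp add: N_def)
  finally show ?thesis .
qed

lemma G_lipt:
  assumes "\<And>j s t. 0 \<le> s \<Longrightarrow> s \<le> t \<Longrightarrow> \<bar>y t j - y s j\<bar> \<le> K * (t - s)"
    and "0 \<le> s" "s \<le> t"
  shows "\<bar>G (y t) i - G (y s) i\<bar> \<le> (L * N * K) * (t - s)"
proof -
  have "\<bar>G (y t) i - G (y s) i\<bar> \<le> L * dd (y t) (y s)" by (rule Gl)
  also have "\<dots> \<le> L * (N * (K * (t - s)))"
    using Lpos by (intro mult_left_mono dd_const assms) auto
  finally show ?thesis by (simp add: algebra_simps)
qed

lemma G_cont:
  assumes "\<And>j s t. 0 \<le> s \<Longrightarrow> s \<le> t \<Longrightarrow> \<bar>y t j - y s j\<bar> \<le> K * (t - s)"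
  shows "continuous_on {0..} (\<lambda>s. G (y s) i)"
  by (rule lipt_cont[of _ "L * N * K"]) (rule G_lipt[OF assms])

lemma int_diff:
  fixes g :: "real \<Rightarrow> real"
  assumes "continuous_on {0..} g" "0 \<le> s" "s \<le> t"
  shows "integral {0..t} g - integral {0..s} g = integral {s..t} g"
proof -
  have "g integrable_on {0..t}"
    by (rule integrable_continuous_real, rule continuous_on_subset[OF assms(1)]) auto
  from Henstock_Kurzweil_Integration.integral_combine[OF assms(2,3) this] show ?thesis by simp
qed

lemma pic_lipt:
  "0 \<le> s \<Longrightarrow> s \<le> t \<Longrightarrow> \<bar>pic G z0 n t j - pic G z0 n s j\<bar> \<le> B * (t - s)"
proof (induction n arbitrary: s t j)
  case 0
  then show ?case using B_nonneg by simp
next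
  case (Suc n)
  have c: "continuous_on {0..} (\<lambda>s. G (pic G z0 n s) j)"
    by (rule G_cont) (rule Suc.IH)
  have "pic G z0 (Suc n) t j - pic G z0 (Suc n) s j = integral {s..t} (\<lambda>s. G (pic G z0 n s) j)"
    using int_diff[OF c Suc.prems] by simp
  also have "\<bar>\<dots>\<bar> \<le> B * (t - s)"
    using integral_bound[OF Suc.prems(2) continuous_on_subset[OF c], of B] Suc.prems Gb by auto
  finally show ?case by simp
qed

lemma pic_Gcont: "continuous_on {0..} (\<lambda>s. G (pic G z0 n s) j)"
  by (rule G_cont) (rule pic_lipt)

definition bnd :: "nat \<Rightarrow> real \<Rightarrow> real" where
  "bnd n t = N * B * (N * L) ^ n * t ^ Suc n / fact (Suc n)"

lemma pic_est:
  "0 \<le> t \<Longrightarrow> dd (pic G z0 (Suc n) t) (pic G z0 n t) \<le> bnd n t"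
proof (induction n arbitrary: t)
  case 0
  have "\<bar>pic G z0 (Suc 0) t j - pic G z0 0 t j\<bar> \<le> B * t" for j
  proof -
    have "\<bar>integral {0..t} (\<lambda>s. G z0 j)\<bar> = t * \<bar>G z0 j\<bar>" using 0 by (simp add: abs_mult)
    also have "\<dots> \<le> t * B" using 0 Gb by (intro mult_left_mono) auto
    finally show ?thesis by (simp add: mult.commute)
  qed
  then have "dd (pic G z0 (Suc 0) t) (pic G z0 0 t) \<le> N * (B * t)" by (rule dd_const)
  then show ?case by (simp add: bnd_def)
next
  case (Suc n)
  define c where "c = L * (N * B * (N * L) ^ n / fact (Suc n))"
  have "\<bar>pic G z0 (Suc (Suc n)) t j - pic G z0 (Suc n) t j\<bar> \<le> c / real (Suc (Suc n)) * t ^ Suc (Suc n)" for j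
  proof -
    have cs: "continuous_on {0..t} (\<lambda>s. G (pic G z0 (Suc n) s) j - G (pic G z0 n s) j)"
      by (rule continuous_on_subset[OF continuous_on_diff[OF pic_Gcont pic_Gcont]]) auto
    have "pic G z0 (Suc (Suc n)) t j - pic G z0 (Suc n) t j
        = integral {0..t} (\<lambda>s. G (pic G z0 (Suc n) s) j - G (pic G z0 n s) j)"
    proof -
      have i: "(\<lambda>s. G (pic G z0 m s) j) integrable_on {0..t}" for m
        by (rule integrable_continuous_real, rule continuous_on_subset[OF pic_Gcont]) auto
      have e: "pic G z0 (Suc m) t j = z0 j + integral {0..t} (\<lambda>s. G (pic G z0 m s) j)" for m
        by simp
      show ?thesis unfolding e integral_diff[OF i i] by simp
    qed
    also have "\<bar>\<dots>\<bar> \<le> integral {0..t} (\<lambda>s. c * s ^ Suc n)"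
    proof (rule int_abs_le)
      show "(\<lambda>s. G (pic G z0 (Suc n) s) j - G (pic G z0 n s) j) integrable_on {0..t}"
        using cs by (rule integrable_continuous_real)
      show "(\<lambda>s. c * s ^ Suc n) integrable_on {0..t}"
        using poly_int[OF Suc.prems] by blast
      fix s assume s: "s \<in> {0..t}"
      have "\<bar>G (pic G z0 (Suc n) s) j - G (pic G z0 n s) j\<bar> \<le> L * dd (pic G z0 (Suc n) s) (pic G z0 n s)"
        by (rule Gl)
      also have "\<dots> \<le> L * bnd n s" using Suc.IH[of s] s Lpos by (intro mult_left_mono) auto
      also have "\<dots> = c * s ^ Suc n" by (simp add: bnd_def c_def)
      finally show "\<bar>G (pic G z0 (Suc n) s) j - G (pic G z0 n s) j\<bar> \<le> c * s ^ Suc n" .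
    qed
    also have "\<dots> = c / real (Suc (Suc n)) * t ^ Suc (Suc n)"
      using poly_int[OF Suc.prems] by blast
    finally show ?thesis .
  qed
  then have "dd (pic G z0 (Suc (Suc n)) t) (pic G z0 (Suc n) t) \<le> N * (c / real (Suc (Suc n)) * t ^ Suc (Suc n))"
    by (rule dd_const)
  also have "\<dots> = bnd (Suc n) t"
    unfolding bnd_def c_def by (simp add: field_simps del: of_nat_Suc)
  finally show ?case .
qed

end



context pic_loc begin

lemma bnd_alt: "bnd n t = B / L * (inverse (fact (Suc n)) * (N * L * t) ^ Suc n)"
  unfolding bnd_def using Lpos by (simp add: field_simps power_mult_distrib del: fact_Suc)

lemma bnd_summ: "summable (\<lambda>n. bnd n t)"
proof -
  have "summable (\<lambda>n. inverse (fact (Suc n)) * (N * L * t) ^ Suc n)"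
    using summable_exp[of "N * L * t"] by (subst summable_Suc_iff)
  then show ?thesis unfolding bnd_alt by (rule summable_mult)
qed

lemma bnd_mono: "0 \<le> s \<Longrightarrow> s \<le> t \<Longrightarrow> bnd n s \<le> bnd n t"
  unfolding bnd_def using N_pos Lpos B_nonneg
  by (intro divide_right_mono mult_left_mono power_mono) auto

definition df :: "nat \<Rightarrow> real \<Rightarrow> 'i \<Rightarrow> real" where
  "df n t j = pic G z0 (Suc n) t j - pic G z0 n t j"

lemma df_le: "0 \<le> t \<Longrightarrow> \<bar>df n t j\<bar> \<le> bnd n t"
  unfolding df_def using dd_ge pic_est order_trans by blast

lemma df_summ: assumes "0 \<le> t" shows "summable (\<lambda>n. df n t j)"
  by (rule summable_comparison_test'[OF bnd_summ[of t], of 0]) (simp add: df_le[OF assms])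

definition xs :: "real \<Rightarrow> 'i \<Rightarrow> real" where
  "xs t j = z0 j + (\<Sum>n. df n t j)"

lemma pic_sum: "pic G z0 n t j = z0 j + (\<Sum>k<n. df k t j)"
  unfolding df_def by (subst sum_lessThan_telescope) simp

lemma pic_lim: "0 \<le> t \<Longrightarrow> (\<lambda>n. pic G z0 n t j) \<longlonglongrightarrow> xs t j"
  unfolding pic_sum xs_def by (intro tendsto_add tendsto_const summable_LIMSEQ df_summ)

definition tl :: "nat \<Rightarrow> real \<Rightarrow> real" where
  "tl n t = (\<Sum>k. bnd (k + n) t)"

lemma tail:
  assumes "0 \<le> s" "s \<le> t" shows "\<bar>xs s j - pic G z0 n s j\<bar> \<le> tl n t"
proof -
  have "xs s j - pic G z0 n s j = (\<Sum>k. df (k + n) s j)"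
  proof -
    have "(\<Sum>k. df k s j) = (\<Sum>k. df (k + n) s j) + (\<Sum>k<n. df k s j)"
      by (rule suminf_split_initial_segment[OF df_summ[OF assms(1)]])
    then show ?thesis unfolding xs_def pic_sum by linarith
  qed
  also have "norm \<dots> \<le> (\<Sum>k. bnd (k + n) t)"
  proof (rule norm_suminf_le)
    fix k show "norm (df (k + n) s j) \<le> bnd (k + n) t"
      using order_trans[OF df_le[OF assms(1)] bnd_mono[OF assms]] by simp
    show "summable (\<lambda>k. bnd (k + n) t)" using bnd_summ by (rule summable_ignore_initial_segment)
  qed
  finally show ?thesis unfolding tl_def by simp
qed

lemma tl_lim: "(\<lambda>n. tl n t) \<longlonglongrightarrow> 0"
proof -
  have "tl n t = (\<Sum>k. bnd k t) - (\<Sum>k<n. bnd k t)" for n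
  proof -
    have "(\<Sum>k. bnd k t) = (\<Sum>k. bnd (k + n) t) + (\<Sum>k<n. bnd k t)"
      by (rule suminf_split_initial_segment[OF bnd_summ])
    then show ?thesis unfolding tl_def by linarith
  qed
  moreover have "(\<lambda>n. (\<Sum>k. bnd k t) - (\<Sum>k<n. bnd k t)) \<longlonglongrightarrow> (\<Sum>k. bnd k t) - (\<Sum>k. bnd k t)"
    by (intro tendsto_diff tendsto_const summable_LIMSEQ bnd_summ)
  ultimately show ?thesis by simp
qed

lemma xs_lipt: "0 \<le> s \<Longrightarrow> s \<le> t \<Longrightarrow> \<bar>xs t j - xs s j\<bar> \<le> B * (t - s)"
  by (rule LIMSEQ_le_const2[OF tendsto_rabs[OF tendsto_diff[OF pic_lim pic_lim]]]) (auto intro: pic_lipt)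

lemma xs_Gcont: "continuous_on {0..} (\<lambda>s. G (xs s) j)"
  by (rule G_cont) (rule xs_lipt)

lemma xs_cont: "continuous_on {0..} (\<lambda>s. xs s j)"
  by (rule lipt_cont) (rule xs_lipt)

lemma xs_int:
  assumes t: "0 \<le> t" shows "xs t j = z0 j + integral {0..t} (\<lambda>s. G (xs s) j)"
proof -
  let ?E = "\<bar>xs t j - z0 j - integral {0..t} (\<lambda>s. G (xs s) j)\<bar>"
  have le: "?E \<le> tl (Suc n) t + t * (L * (N * tl n t))" for n
  proof -
    have i: "(\<lambda>s. G (pic G z0 n s) j) integrable_on {0..t}" "(\<lambda>s. G (xs s) j) integrable_on {0..t}"
      by (rule integrable_continuous_real, rule continuous_on_subset[OF pic_Gcont], force)
         (rule integrable_continuous_real, rule continuous_on_subset[OF xs_Gcont], force)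
    have c: "continuous_on {0..t} (\<lambda>s. G (pic G z0 n s) j - G (xs s) j)"
      by (rule continuous_on_subset[OF continuous_on_diff[OF pic_Gcont xs_Gcont]]) auto
    have "xs t j - z0 j - integral {0..t} (\<lambda>s. G (xs s) j)
        = (xs t j - pic G z0 (Suc n) t j) + integral {0..t} (\<lambda>s. G (pic G z0 n s) j - G (xs s) j)"
      unfolding integral_diff[OF i] by simp
    also have "\<bar>\<dots>\<bar> \<le> tl (Suc n) t + (L * (N * tl n t)) * (t - 0)"
    proof (rule order_trans[OF abs_triangle_ineq add_mono])
      show "\<bar>xs t j - pic G z0 (Suc n) t j\<bar> \<le> tl (Suc n) t" by (rule tail) (use t in auto)
      have "norm (integral {0..t} (\<lambda>s. G (pic G z0 n s) j - G (xs s) j)) \<le> (L * (N * tl n t)) * (t - 0)"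
      proof (rule integral_bound[OF t c])
        fix s assume s: "s \<in> {0..t}"
        have "\<bar>G (pic G z0 n s) j - G (xs s) j\<bar> \<le> L * dd (pic G z0 n s) (xs s)" by (rule Gl)
        also have "\<dots> \<le> L * (N * tl n t)"
          using Lpos s tail[of s t] by (intro mult_left_mono dd_const) (auto simp: abs_minus_commute)
        finally show "norm (G (pic G z0 n s) j - G (xs s) j) \<le> L * (N * tl n t)" by simp
      qed
      then show "\<bar>integral {0..t} (\<lambda>s. G (pic G z0 n s) j - G (xs s) j)\<bar> \<le> (L * (N * tl n t)) * (t - 0)"
        by simp
    qed
    finally show ?thesis by (simp add: mult.commute)
  qed
  have "(\<lambda>n. tl (Suc n) t + t * (L * (N * tl n t))) \<longlonglongrightarrow> 0 + t * (L * (N * 0))"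
    by (intro tendsto_add tendsto_mult tendsto_const LIMSEQ_Suc tl_lim)
  then have lim: "(\<lambda>n. tl (Suc n) t + t * (L * (N * tl n t))) \<longlonglongrightarrow> 0" by simp
  have "?E \<le> 0"
    by (rule LIMSEQ_le_const[OF lim]) (use le in blast)
  then show ?thesis by simp
qed

lemma xs0: "xs 0 = z0"
proof
  fix j
  have "xs 0 j = z0 j + integral {0..0} (\<lambda>s. G (xs s) j)" by (rule xs_int) simp
  also have "\<dots> = z0 j" by simp
  finally show "xs 0 j = z0 j" .
qed

lemma xs_deriv:
  assumes t: "0 < t" shows "((\<lambda>s. xs s j) has_real_derivative G (xs t) j) (at t)"
proof -
  have "((\<lambda>u. integral {0..u} (\<lambda>s. G (xs s) j)) has_real_derivative G (xs t) j) (at t within {0..t+1})"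
    by (rule integral_has_real_derivative[OF continuous_on_subset[OF xs_Gcont]]) (use t in auto)
  then have "((\<lambda>u. integral {0..u} (\<lambda>s. G (xs s) j)) has_real_derivative G (xs t) j) (at t)"
    using at_within_Icc_at[of 0 t "t+1"] t by simp
  then have "((\<lambda>u. z0 j + integral {0..u} (\<lambda>s. G (xs s) j)) has_real_derivative 0 + G (xs t) j) (at t)"
    by (intro DERIV_add DERIV_const)
  then have "((\<lambda>u. z0 j + integral {0..u} (\<lambda>s. G (xs s) j)) has_real_derivative G (xs t) j) (at t)"
    by simp
  then show ?thesis
  proof (rule has_field_derivative_transform_within_open[of _ _ _ "{0<..}"])
    fix x :: real assume "x \<in> {0<..}"
    then show "z0 j + integral {0..x} (\<lambda>s. G (xs s) j) = xs x j" using xs_int[of x j] by simp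
  qed (use t in auto)
qed

end

lemma picard:
  fixes G :: "('i::finite \<Rightarrow> real) \<Rightarrow> 'i \<Rightarrow> real"
  assumes "\<And>z i. \<bar>G z i\<bar> \<le> B" "\<And>z z' i. \<bar>G z i - G z' i\<bar> \<le> L * dd z z'" "L > 0"
  shows "\<exists>x. x 0 = z0 \<and> (\<forall>j. continuous_on {0..} (\<lambda>t. x t j)) \<and>
     (\<forall>t>0. \<forall>j. ((\<lambda>s. x s j) has_real_derivative G (x t) j) (at t))"
proof -
  interpret pic_loc G B L z0 using assms by unfold_locales auto
  show ?thesis using xs0 xs_cont xs_deriv by blast
qed



lemma stay_below:
  fixes y :: "real \<Rightarrow> real"
  assumes cont: "continuous_on {0..} y"
    and der: "\<And>t. t > 0 \<Longrightarrow> (y has_real_derivative y' t) (at t)"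
    and y0: "y 0 \<le> c" and neg: "\<And>t. t > 0 \<Longrightarrow> y t \<ge> c \<Longrightarrow> y' t < 0"
    and t: "t \<ge> 0"
  shows "y t \<le> c"
proof (rule ccontr)
  assume "\<not> y t \<le> c"
  then have yt: "y t > c" by simp
  define A where "A = {0..t} \<inter> y -` {..c}"
  have cA: "closed A" unfolding A_def
    by (rule continuous_closed_preimage[OF continuous_on_subset[OF cont]]) auto
  have A0: "0 \<in> A" using y0 t unfolding A_def by auto
  have bA: "bdd_above A" unfolding A_def by (rule bdd_aboveI[of _ t]) auto
  define s0 where "s0 = Sup A"
  have s0A: "s0 \<in> A" unfolding s0_def using closed_contains_Sup[OF _ bA cA] A0 by auto
  then have s0: "0 \<le> s0" "s0 \<le> t" "y s0 \<le> c" unfolding A_def by auto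
  have s0t: "s0 < t" using s0 yt by (cases "s0 = t") auto
  have above: "y x > c" if "s0 < x" "x \<le> t" for x
  proof (rule ccontr)
    assume "\<not> y x > c"
    then have "x \<in> A" using that s0 unfolding A_def by auto
    then have "x \<le> s0" unfolding s0_def using bA by (rule cSup_upper)
    then show False using that by simp
  qed
  obtain l z where z: "s0 < z" "z < t" "(y has_real_derivative l) (at z)" "y t - y s0 = (t - s0) * l"
  proof -
    have "\<exists>l z. s0 < z \<and> z < t \<and> (y has_real_derivative l) (at z) \<and> y t - y s0 = (t - s0) * l"
    proof (rule MVT[OF s0t])
      show "continuous_on {s0..t} y" by (rule continuous_on_subset[OF cont]) (use s0 in auto)
      fix x assume "s0 < x" "x < t"
      then have "x > 0" using s0 by simp
      from der[OF this] show "y differentiable (at x)" by (meson real_differentiable_def)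
    qed
    then show ?thesis using that by blast
  qed
  have "z > 0" using z s0 by simp
  then have "l = y' z" using z(3) der DERIV_unique by blast
  moreover have "y' z < 0" using neg[OF \<open>z > 0\<close>] above[of z] z by auto
  ultimately have "y t - y s0 < 0" using z(4) s0t by (simp add: mult_pos_neg)
  then show False using s0 yt by simp
qed

lemma stay_above:
  fixes y :: "real \<Rightarrow> real"
  assumes cont: "continuous_on {0..} y"
    and der: "\<And>t. t > 0 \<Longrightarrow> (y has_real_derivative y' t) (at t)"
    and y0: "y 0 \<ge> c" and pos: "\<And>t. t > 0 \<Longrightarrow> y t \<le> c \<Longrightarrow> y' t > 0"
    and t: "t \<ge> 0"
  shows "y t \<ge> c"
proof -
  have "- y t \<le> - c"
  proof (rule stay_below[of "\<lambda>s. - y s" "\<lambda>s. - y' s"])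
    show "continuous_on {0..} (\<lambda>s. - y s)" using cont by (intro continuous_intros)
    show "((\<lambda>s. - y s) has_real_derivative - y' t) (at t)" if "t > 0" for t
      using der[OF that] by (rule DERIV_minus)
  qed (use y0 pos t in auto)
  then show ?thesis by simp
qed



lemma sum_sq_bound:
  fixes d :: "'i::finite \<Rightarrow> real"
  shows "(\<Sum>j\<in>UNIV. \<bar>d j\<bar>)^2 \<le> real CARD('i) * (\<Sum>j\<in>UNIV. (d j)^2)"
proof -
  have "(\<Sum>j\<in>UNIV. \<bar>d j\<bar>)^2 = (\<Sum>i\<in>UNIV. \<Sum>j\<in>UNIV. \<bar>d i\<bar> * \<bar>d j\<bar>)"
    by (simp add: power2_eq_square sum_product)
  also have "\<dots> \<le> (\<Sum>i\<in>UNIV. \<Sum>j\<in>UNIV. ((d i)^2 + (d j)^2) / 2)"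
  proof (intro sum_mono)
    fix i j
    have "0 \<le> (\<bar>d i\<bar> - \<bar>d j\<bar>)^2" by simp
    then show "\<bar>d i\<bar> * \<bar>d j\<bar> \<le> ((d i)^2 + (d j)^2) / 2"
      by (simp add: power2_eq_square algebra_simps)
  qed
  also have "\<dots> = real CARD('i) * (\<Sum>j\<in>UNIV. (d j)^2)"
    by (simp add: sum.distrib sum_divide_distrib[symmetric] sum_distrib_left[symmetric] field_simps)
  finally show ?thesis .
qed

lemma bounded_coord:
  fixes y :: "real \<Rightarrow> real"
  assumes "continuous_on {0..} y"
  shows "\<exists>c. \<forall>s\<in>{0..T}. \<bar>y s\<bar> \<le> c"
proof -
  have "bounded (y ` {0..T})"
    by (rule compact_imp_bounded, rule compact_continuous_image, rule continuous_on_subset[OF assms]) auto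
  then show ?thesis unfolding bounded_iff by auto
qed

lemma uniq:
  fixes F :: "('i::finite \<Rightarrow> real) \<Rightarrow> 'i \<Rightarrow> real" and x x' :: "real \<Rightarrow> 'i \<Rightarrow> real"
  assumes loclip: "\<And>C. \<exists>L. \<forall>y y' i. (\<forall>j. \<bar>y j\<bar> \<le> C) \<longrightarrow> (\<forall>j. \<bar>y' j\<bar> \<le> C) \<longrightarrow> \<bar>F y i - F y' i\<bar> \<le> L * dd y y'"
    and xc: "\<And>j. continuous_on {0..} (\<lambda>t. x t j)"
    and xd: "\<And>t j. t > 0 \<Longrightarrow> ((\<lambda>s. x s j) has_real_derivative F (x t) j) (at t)"
    and x'c: "\<And>j. continuous_on {0..} (\<lambda>t. x' t j)"
    and x'd: "\<And>t j. t > 0 \<Longrightarrow> ((\<lambda>s. x' s j) has_real_derivative F (x' t) j) (at t)"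
    and x0: "x 0 = x' 0" and T0: "0 \<le> T"
  shows "x T = x' T"
proof (cases "T = 0")
  case True then show ?thesis using x0 by simp
next
  case False
  then have T: "T > 0" using T0 by simp
  have "\<forall>j. \<exists>c. \<forall>s\<in>{0..T}. \<bar>x s j\<bar> \<le> c \<and> \<bar>x' s j\<bar> \<le> c"
  proof
    fix j
    obtain c1 where c1: "\<forall>s\<in>{0..T}. \<bar>x s j\<bar> \<le> c1" using bounded_coord[OF xc] by blast
    obtain c2 where c2: "\<forall>s\<in>{0..T}. \<bar>x' s j\<bar> \<le> c2" using bounded_coord[OF x'c] by blast
    show "\<exists>c. \<forall>s\<in>{0..T}. \<bar>x s j\<bar> \<le> c \<and> \<bar>x' s j\<bar> \<le> c"
      by (rule exI[of _ "max c1 c2"]) (use c1 c2 in force)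
  qed
  then obtain cf where cf: "\<And>j s. s \<in> {0..T} \<Longrightarrow> \<bar>x s j\<bar> \<le> cf j \<and> \<bar>x' s j\<bar> \<le> cf j"
    by metis
  define C where "C = (\<Sum>j\<in>UNIV. \<bar>cf j\<bar>)"
  have cfC: "\<bar>cf j\<bar> \<le> C" for j unfolding C_def by (rule member_le_sum) auto
  have box: "\<bar>x s j\<bar> \<le> C" "\<bar>x' s j\<bar> \<le> C" if "s \<in> {0..T}" for s j
    using cf[OF that, of j] cfC[of j] by auto
  obtain L where L: "\<And>y y' i. (\<forall>j. \<bar>y j\<bar> \<le> C) \<Longrightarrow> (\<forall>j. \<bar>y' j\<bar> \<le> C) \<Longrightarrow> \<bar>F y i - F y' i\<bar> \<le> L * dd y y'"
    using loclip[of C] by blast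
  define N where "N = real CARD('i)"
  define K where "K = 2 * \<bar>L\<bar> * N"
  define E where "E s = (\<Sum>j\<in>UNIV. (x s j - x' s j)^2)" for s
  define E' where "E' s = (\<Sum>j\<in>UNIV. 2 * (x s j - x' s j) * (F (x s) j - F (x' s) j))" for s
  define Q where "Q s = exp (- K * s) * E s" for s
  have Ed: "(E has_real_derivative E' s) (at s)" if "s > 0" for s
    unfolding E_def[abs_def] E'_def
  proof (rule DERIV_sum)
    fix j
    note DERIV_power[OF DERIV_diff[OF xd[of s j, OF that] x'd[of s j, OF that]], where n=2]
    then show "((\<lambda>s. (x s j - x' s j)^2) has_real_derivative 2 * (x s j - x' s j) * (F (x s) j - F (x' s) j)) (at s)"
      by (simp add: algebra_simps)
  qed
  have expd: "((\<lambda>s. exp (- K * s)) has_real_derivative exp (- K * s) * (- K)) (at s)" for s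
    by (auto intro!: derivative_eq_intros)
  have Qd: "(Q has_real_derivative exp (- K * s) * (- K) * E s + exp (- K * s) * E' s) (at s)" if "s > 0" for s
    unfolding Q_def[abs_def] using DERIV_mult[OF expd[of s] Ed[OF that]] by (simp add: mult.commute)
  have E'le: "E' s \<le> K * E s" if "s \<in> {0..T}" for s
  proof -
    define D where "D = dd (x s) (x' s)"
    have D0: "0 \<le> D" unfolding D_def by (rule dd_nonneg)
    have "E' s \<le> (\<Sum>j\<in>UNIV. 2 * \<bar>x s j - x' s j\<bar> * (\<bar>L\<bar> * D))"
      unfolding E'_def
    proof (rule sum_mono)
      fix j
      have "\<bar>F (x s) j - F (x' s) j\<bar> \<le> L * D" unfolding D_def by (rule L) (use box that in auto)
      also have "\<dots> \<le> \<bar>L\<bar> * D" using D0 by (intro mult_right_mono) auto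
      finally have *: "\<bar>F (x s) j - F (x' s) j\<bar> \<le> \<bar>L\<bar> * D" .
      have "2 * (x s j - x' s j) * (F (x s) j - F (x' s) j) \<le> \<bar>2 * (x s j - x' s j) * (F (x s) j - F (x' s) j)\<bar>"
        by simp
      also have "\<dots> = 2 * \<bar>x s j - x' s j\<bar> * \<bar>F (x s) j - F (x' s) j\<bar>" by (simp only: abs_mult abs_numeral)
      also have "\<dots> \<le> 2 * \<bar>x s j - x' s j\<bar> * (\<bar>L\<bar> * D)" using * by (intro mult_left_mono) auto
      finally show "2 * (x s j - x' s j) * (F (x s) j - F (x' s) j) \<le> 2 * \<bar>x s j - x' s j\<bar> * (\<bar>L\<bar> * D)" .
    qed
    also have "\<dots> = 2 * \<bar>L\<bar> * D^2"
      unfolding D_def dd_def by (simp add: sum_distrib_left[symmetric] sum_distrib_right[symmetric] power2_eq_square algebra_simps)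
    also have "\<dots> \<le> 2 * \<bar>L\<bar> * (N * E s)"
      unfolding D_def dd_def E_def N_def by (intro mult_left_mono sum_sq_bound) auto
    finally show ?thesis unfolding K_def by (simp add: algebra_simps)
  qed
  have Qc: "continuous_on {0..T} Q"
  proof -
    have "continuous_on {0..} Q" unfolding Q_def[abs_def] E_def
      by (intro continuous_intros xc x'c)
    then show ?thesis by (rule continuous_on_subset) auto
  qed
  obtain l z where z: "0 < z" "z < T" "(Q has_real_derivative l) (at z)" "Q T - Q 0 = (T - 0) * l"
  proof -
    have "\<exists>l z. 0 < z \<and> z < T \<and> (Q has_real_derivative l) (at z) \<and> Q T - Q 0 = (T - 0) * l"
    proof (rule MVT[OF T Qc])
      fix s assume "0 < s" "s < T"
      from Qd[OF this(1)] show "Q differentiable (at s)" by (meson real_differentiable_def)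
    qed
    then show ?thesis using that by blast
  qed
  have "l = exp (- K * z) * (- K) * E z + exp (- K * z) * E' z"
    using z(3) Qd[OF z(1)] DERIV_unique by blast
  also have "\<dots> = exp (- K * z) * (E' z - K * E z)" by (simp add: algebra_simps)
  also have "\<dots> \<le> 0" using E'le[of z] z by (intro mult_nonneg_nonpos) auto
  finally have "l \<le> 0" .
  moreover have "Q 0 = 0" unfolding Q_def E_def using x0 by simp
  ultimately have "Q T \<le> 0" using z(4) T by (simp add: mult_nonneg_nonpos)
  then have "E T \<le> 0" unfolding Q_def by (simp add: mult_le_0_iff)
  moreover have "E T \<ge> 0" unfolding E_def by (rule sum_nonneg) auto
  ultimately have "E T = 0" by simp
  then have "\<forall>j\<in>UNIV. (x T j - x' T j)^2 = 0" unfolding E_def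
    by (subst sum_nonneg_eq_0_iff[symmetric]) auto
  then show ?thesis by auto
qed



definition Fsys :: "('n::finite \<Rightarrow> real) \<Rightarrow> ('n \<Rightarrow> 'n \<Rightarrow> real) \<Rightarrow> ('n \<Rightarrow> real \<Rightarrow> real) \<Rightarrow> real
   \<Rightarrow> ('n \<Rightarrow> real \<Rightarrow> real) \<Rightarrow> ('n \<Rightarrow> real) \<Rightarrow> real \<Rightarrow> real \<Rightarrow> real
   \<Rightarrow> ('n \<Rightarrow> real) \<Rightarrow> real \<Rightarrow> ('n option \<Rightarrow> real) \<Rightarrow> 'n option \<Rightarrow> real" where
  "Fsys a w f k \<phi> J P r V \<gamma> b z j = (case j of
     Some i \<Rightarrow> - a i * z (Some i) + (\<Sum>j\<in>UNIV. w i j * f j (z (Some j))) + k * \<phi> i (z None) * z (Some i) + J i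
          - P * z (Some i) * (\<Sum>j\<in>UNIV. Gam r V (z (Some j)))
   | None \<Rightarrow> (\<Sum>i\<in>UNIV. \<gamma> i * z (Some i)) - b * z None)"

lemma fsys_lipb:
  assumes f: "\<And>i. locally_lipschitz_real (f i)" and phi: "\<And>i. locally_lipschitz_real (\<phi> i)"
    and r: "r > 0"
  shows "lipb C (\<lambda>y. Fsys a w f k \<phi> J P r V \<gamma> b y j)"
proof (cases j)
  case None
  have "lipb C (\<lambda>y. (\<Sum>i\<in>UNIV. \<gamma> i * y (Some i)) - b * y None)"
    by (intro lipb_diff lipb_sum lipb_mult lipb_const lipb_proj) auto
  then show ?thesis using None by (simp add: Fsys_def)
next
  case (Some i)
  have cf: "lipb C (\<lambda>y. f j (y (Some j)))" for j by (rule lipb_comp[OF llr_lip[OF f]])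
  have cp: "lipb C (\<lambda>y. \<phi> i (y None))" by (rule lipb_comp[OF llr_lip[OF phi]])
  have cg: "lipb C (\<lambda>y. Gam r V (y (Some j)))" for j
    by (rule lipb_comp) (use gam_lip[OF r] in blast)
  have "lipb C (\<lambda>y. - a i * y (Some i) + (\<Sum>j\<in>UNIV. w i j * f j (y (Some j))) + k * \<phi> i (y None) * y (Some i) + J i
          - P * y (Some i) * (\<Sum>j\<in>UNIV. Gam r V (y (Some j))))"
    by (intro lipb_add lipb_diff lipb_mult lipb_sum cf cp cg lipb_const lipb_proj) auto
  then show ?thesis using Some by (simp add: Fsys_def)
qed

lemma lipb_all:
  fixes F :: "('i::finite \<Rightarrow> real) \<Rightarrow> 'j::finite \<Rightarrow> real"
  assumes "\<And>j. lipb C (\<lambda>y. F y j)"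
  shows "\<exists>B L. \<forall>y y' j. (\<forall>l. \<bar>y l\<bar> \<le> C) \<longrightarrow> (\<forall>l. \<bar>y' l\<bar> \<le> C) \<longrightarrow>
     \<bar>F y j\<bar> \<le> B \<and> \<bar>F y j - F y' j\<bar> \<le> L * dd y y'"
proof -
  have "\<forall>j. \<exists>BL. \<forall>y y'. (\<forall>l. \<bar>y l\<bar> \<le> C) \<longrightarrow> (\<forall>l. \<bar>y' l\<bar> \<le> C) \<longrightarrow>
      \<bar>F y j\<bar> \<le> fst BL \<and> \<bar>F y j - F y' j\<bar> \<le> snd BL * dd y y'"
    using assms unfolding lipb_def by force
  then obtain BL where BL: "\<And>j y y'. (\<forall>l. \<bar>y l\<bar> \<le> C) \<Longrightarrow> (\<forall>l. \<bar>y' l\<bar> \<le> C) \<Longrightarrow>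
      \<bar>F y j\<bar> \<le> fst (BL j) \<and> \<bar>F y j - F y' j\<bar> \<le> snd (BL j) * dd y y'"
    by metis
  define B where "B = (\<Sum>j\<in>UNIV. \<bar>fst (BL j)\<bar>)"
  define L where "L = (\<Sum>j\<in>UNIV. \<bar>snd (BL j)\<bar>)"
  show ?thesis
  proof (intro exI allI impI conjI)
    fix y y' :: "'i \<Rightarrow> real" and j :: 'j assume y: "\<forall>l. \<bar>y l\<bar> \<le> C" and y': "\<forall>l. \<bar>y' l\<bar> \<le> C"
    have "\<bar>fst (BL j)\<bar> \<le> B" unfolding B_def by (rule member_le_sum) auto
    then show "\<bar>F y j\<bar> \<le> B" using BL[OF y y', of j] by auto
    have Lj: "\<bar>snd (BL j)\<bar> \<le> L" unfolding L_def by (rule member_le_sum) auto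
    have "\<bar>F y j - F y' j\<bar> \<le> snd (BL j) * dd y y'" using BL[OF y y', of j] by auto
    also have "\<dots> \<le> L * dd y y'" using Lj dd_nonneg[of y y']
      by (intro mult_right_mono) auto
    finally show "\<bar>F y j - F y' j\<bar> \<le> L * dd y y'" .
  qed
qed

lemma clamp_lip: "\<bar>max (- c) (min c a) - max (- c) (min c b)\<bar> \<le> \<bar>a - (b::real)\<bar>"
  by (simp add: max_def min_def abs_if)

lemma gam_pos: "Gam r V s > 0"
  unfolding Gam_def by (simp add: add_pos_pos)

definition xf :: "(real \<Rightarrow> 'n \<Rightarrow> real) \<Rightarrow> (real \<Rightarrow> real) \<Rightarrow> real \<Rightarrow> 'n option \<Rightarrow> real" where
  "xf u \<rho> t j = (case j of Some i \<Rightarrow> u t i | None \<Rightarrow> \<rho> t)"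

definition xf0 :: "('n \<Rightarrow> real) \<Rightarrow> real \<Rightarrow> 'n option \<Rightarrow> real" where
  "xf0 u0 \<rho>0 j = (case j of Some i \<Rightarrow> u0 i | None \<Rightarrow> \<rho>0)"

lemma all_opt: "(\<forall>j. P j) \<longleftrightarrow> P None \<and> (\<forall>i. P (Some i))"
  by (metis option.exhaust)

lemma sol_iff:
  "is_global_solution a w f k \<phi> J P r V \<gamma> b u0 \<rho>0 u \<rho> \<longleftrightarrow>
    xf u \<rho> 0 = xf0 u0 \<rho>0 \<and> (\<forall>j. continuous_on {0..} (\<lambda>t. xf u \<rho> t j)) \<and>
    (\<forall>t>0. \<forall>j. ((\<lambda>s. xf u \<rho> s j) has_real_derivative Fsys a w f k \<phi> J P r V \<gamma> b (xf u \<rho> t) j) (at t))"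
  unfolding is_global_solution_def all_opt fun_eq_iff
  by (auto simp: xf_def xf0_def Fsys_def)



lemma wsum_bound:
  fixes w :: "'i \<Rightarrow> 'j::finite \<Rightarrow> real" and f :: "'j \<Rightarrow> real \<Rightarrow> real"
  assumes "\<And>j s. \<bar>f j s\<bar> \<le> \<beta>"
  shows "\<bar>\<Sum>j\<in>UNIV. w i j * f j (y j)\<bar> \<le> (\<Sum>j\<in>UNIV. \<bar>w i j\<bar> * \<beta>)"
proof -
  have "\<bar>\<Sum>j\<in>UNIV. w i j * f j (y j)\<bar> \<le> (\<Sum>j\<in>UNIV. \<bar>w i j * f j (y j)\<bar>)" by (rule sum_abs)
  also have "\<dots> \<le> (\<Sum>j\<in>UNIV. \<bar>w i j\<bar> * \<beta>)"
    by (rule sum_mono) (simp add: abs_mult assms mult_left_mono)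
  finally show ?thesis .
qed

lemma sign_some:
  fixes y :: "'n::finite option \<Rightarrow> real"
  assumes akp: "a i > k" and kp: "k > 0" and etap: "\<eta> i > 0" and Pp: "P > 0" and R0: "R \<ge> 0"
    and fb: "\<And>j s. \<bar>f j s\<bar> \<le> \<beta>" and phi: "\<And>s. \<phi> i s = 1 - \<eta> i * s\<^sup>2"
    and Rbig: "(a i - k) * R > (\<Sum>j\<in>UNIV. \<bar>w i j\<bar> * \<beta>) + \<bar>J i\<bar>"
  shows "y (Some i) = R \<Longrightarrow> Fsys a w f k \<phi> J P r V \<gamma> b y (Some i) < 0"
    and "y (Some i) = - R \<Longrightarrow> Fsys a w f k \<phi> J P r V \<gamma> b y (Some i) > 0"
proof -
  define W where "W = (\<Sum>j\<in>UNIV. w i j * f j (y (Some j)))"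
  define Wb where "Wb = (\<Sum>j\<in>UNIV. \<bar>w i j\<bar> * \<beta>)"
  define Gs where "Gs = (\<Sum>j\<in>UNIV. Gam r V (y (Some j)))"
  define rho where "rho = y None"
  have W: "\<bar>W\<bar> \<le> Wb" unfolding W_def Wb_def by (rule wsum_bound[OF fb])
  have Gs: "Gs \<ge> 0" unfolding Gs_def by (rule sum_nonneg) (simp add: less_imp_le gam_pos)
  have PRG: "P * R * Gs \<ge> 0" using Pp R0 Gs by simp
  have KR: "k * \<eta> i * rho\<^sup>2 * R \<ge> 0" using kp etap R0 by simp
  have ph: "k * \<phi> i rho * R = k * R - k * \<eta> i * rho\<^sup>2 * R" by (simp add: phi algebra_simps)
  have aR: "(a i - k) * R = a i * R - k * R" by (simp add: algebra_simps)
  have J: "\<bar>J i\<bar> \<ge> J i" "\<bar>J i\<bar> \<ge> - J i" by auto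
  show "y (Some i) = R \<Longrightarrow> Fsys a w f k \<phi> J P r V \<gamma> b y (Some i) < 0"
  proof -
    assume y: "y (Some i) = R"
    have "Fsys a w f k \<phi> J P r V \<gamma> b y (Some i) = - (a i * R) + W + k * \<phi> i rho * R + J i - P * R * Gs"
      unfolding Fsys_def W_def Gs_def rho_def using y by simp
    then show ?thesis using W PRG KR ph aR J Rbig unfolding Wb_def by linarith
  qed
  show "y (Some i) = - R \<Longrightarrow> Fsys a w f k \<phi> J P r V \<gamma> b y (Some i) > 0"
  proof -
    assume y: "y (Some i) = - R"
    have "Fsys a w f k \<phi> J P r V \<gamma> b y (Some i) = a i * R + W - k * \<phi> i rho * R + J i + P * R * Gs"
      unfolding Fsys_def W_def Gs_def rho_def using y by simp
    then show ?thesis using W PRG KR ph aR J Rbig unfolding Wb_def by linarith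
  qed
qed

lemma sign_none:
  fixes y :: "'n::finite option \<Rightarrow> real"
  assumes yb: "\<And>l. \<bar>y (Some l)\<bar> \<le> R"
    and Sbig: "b * S > (\<Sum>i\<in>UNIV. \<bar>\<gamma> i\<bar>) * R"
  shows "y None = S \<Longrightarrow> Fsys a w f k \<phi> J P r V \<gamma> b y None < 0"
    and "y None = - S \<Longrightarrow> Fsys a w f k \<phi> J P r V \<gamma> b y None > 0"
proof -
  have "\<bar>\<Sum>i\<in>UNIV. \<gamma> i * y (Some i)\<bar> \<le> (\<Sum>i\<in>UNIV. \<bar>\<gamma> i * y (Some i)\<bar>)" by (rule sum_abs)
  also have "\<dots> \<le> (\<Sum>i\<in>UNIV. \<bar>\<gamma> i\<bar> * R)"
    by (rule sum_mono) (simp add: abs_mult yb mult_left_mono)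
  also have "\<dots> = (\<Sum>i\<in>UNIV. \<bar>\<gamma> i\<bar>) * R" by (simp add: sum_distrib_right)
  finally have g: "\<bar>\<Sum>i\<in>UNIV. \<gamma> i * y (Some i)\<bar> \<le> (\<Sum>i\<in>UNIV. \<bar>\<gamma> i\<bar>) * R" .
  show "y None = S \<Longrightarrow> Fsys a w f k \<phi> J P r V \<gamma> b y None < 0"
    using g Sbig unfolding Fsys_def by auto
  show "y None = - S \<Longrightarrow> Fsys a w f k \<phi> J P r V \<gamma> b y None > 0"
    using g Sbig unfolding Fsys_def by auto
qed



theorem theorem2p1:
  fixes a \<eta> J \<gamma> :: "'n::finite \<Rightarrow> real"
    and w :: "'n \<Rightarrow> 'n \<Rightarrow> real"
    and f \<phi> :: "'n \<Rightarrow> real \<Rightarrow> real"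
    and b \<beta> k P r V :: real
  assumes m2: "CARD('n) \<ge> 2"
    and a_pos: "\<And>i. a i > 0" and b_pos: "b > 0" and beta_pos: "\<beta> > 0"
    and eta_pos: "\<And>i. \<eta> i > 0" and k_pos: "k > 0"
    and r_pos: "r > 0" and P_pos: "P > 0"
    and f_lip: "\<And>i. locally_lipschitz_real (f i)"
    and phi_lip: "\<And>i. locally_lipschitz_real (\<phi> i)"
    and a_gt_k: "\<And>i. a i > k"
    and f_bdd: "\<And>i s. \<bar>f i s\<bar> \<le> \<beta>"
    and phi_def: "\<And>i s. \<phi> i s = 1 - \<eta> i * s\<^sup>2"
  shows "\<forall>(u0 :: 'n \<Rightarrow> real) (\<rho>0 :: real).
           (\<exists>u \<rho>. is_global_solution a w f k \<phi> J P r V \<gamma> b u0 \<rho>0 u \<rho>) \<and>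
           (\<forall>u \<rho> u' \<rho>'. is_global_solution a w f k \<phi> J P r V \<gamma> b u0 \<rho>0 u \<rho> \<and>
                          is_global_solution a w f k \<phi> J P r V \<gamma> b u0 \<rho>0 u' \<rho>' \<longrightarrow>
                          (\<forall>t\<ge>0. u t = u' t \<and> \<rho> t = \<rho>' t))"
proof (intro allI)
  fix u0 :: "'n \<Rightarrow> real" and \<rho>0 :: real
  define F where "F = Fsys a w f k \<phi> J P r V \<gamma> b"
  have lipF: "lipb C (\<lambda>y. F y j)" for C j
    unfolding F_def by (rule fsys_lipb[OF f_lip phi_lip r_pos])
  have loclip: "\<exists>L. \<forall>y y' i. (\<forall>j. \<bar>y j\<bar> \<le> C) \<longrightarrow> (\<forall>j. \<bar>y' j\<bar> \<le> C) \<longrightarrow> \<bar>F y i - F y' i\<bar> \<le> L * dd y y'" for C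
  proof -
    have "\<exists>B L. \<forall>y y' j. (\<forall>l. \<bar>y l\<bar> \<le> C) \<longrightarrow> (\<forall>l. \<bar>y' l\<bar> \<le> C) \<longrightarrow>
        \<bar>F y j\<bar> \<le> B \<and> \<bar>F y j - F y' j\<bar> \<le> L * dd y y'"
      by (rule lipb_all) (rule lipF)
    then show ?thesis by blast
  qed
  show "(\<exists>u \<rho>. is_global_solution a w f k \<phi> J P r V \<gamma> b u0 \<rho>0 u \<rho>) \<and>
           (\<forall>u \<rho> u' \<rho>'. is_global_solution a w f k \<phi> J P r V \<gamma> b u0 \<rho>0 u \<rho> \<and>
                          is_global_solution a w f k \<phi> J P r V \<gamma> b u0 \<rho>0 u' \<rho>' \<longrightarrow>
                          (\<forall>t\<ge>0. u t = u' t \<and> \<rho> t = \<rho>' t))"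
  proof (intro conjI)
    show "\<forall>u \<rho> u' \<rho>'. is_global_solution a w f k \<phi> J P r V \<gamma> b u0 \<rho>0 u \<rho> \<and>
                          is_global_solution a w f k \<phi> J P r V \<gamma> b u0 \<rho>0 u' \<rho>' \<longrightarrow>
                          (\<forall>t\<ge>0. u t = u' t \<and> \<rho> t = \<rho>' t)"
    proof (intro allI impI)
      fix u \<rho> u' \<rho>' and t :: real
      assume H: "is_global_solution a w f k \<phi> J P r V \<gamma> b u0 \<rho>0 u \<rho> \<and>
                 is_global_solution a w f k \<phi> J P r V \<gamma> b u0 \<rho>0 u' \<rho>'"
        and t: "0 \<le> t"
      have s1: "xf u \<rho> 0 = xf0 u0 \<rho>0" "\<And>j. continuous_on {0..} (\<lambda>t. xf u \<rho> t j)"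
          "\<And>t j. t > 0 \<Longrightarrow> ((\<lambda>s. xf u \<rho> s j) has_real_derivative F (xf u \<rho> t) j) (at t)"
        using H unfolding sol_iff F_def by auto
      have s2: "xf u' \<rho>' 0 = xf0 u0 \<rho>0" "\<And>j. continuous_on {0..} (\<lambda>t. xf u' \<rho>' t j)"
          "\<And>t j. t > 0 \<Longrightarrow> ((\<lambda>s. xf u' \<rho>' s j) has_real_derivative F (xf u' \<rho>' t) j) (at t)"
        using H unfolding sol_iff F_def by auto
      have "xf u \<rho> t = xf u' \<rho>' t"
        by (rule uniq[where F = F, OF loclip s1(2) s1(3) s2(2) s2(3) _ t]) (use s1(1) s2(1) in auto)
      then show "u t = u' t \<and> \<rho> t = \<rho>' t"
        unfolding xf_def fun_eq_iff all_opt by simp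
    qed
  next
    define R where "R = 1 + (\<Sum>i\<in>UNIV. \<bar>u0 i\<bar>) + (\<Sum>i\<in>UNIV. ((\<Sum>j\<in>UNIV. \<bar>w i j\<bar> * \<beta>) + \<bar>J i\<bar>) / (a i - k))"
    define S where "S = 1 + \<bar>\<rho>0\<bar> + (\<Sum>i\<in>UNIV. \<bar>\<gamma> i\<bar>) * R / b"
    define Rv where "Rv j = (case j of Some _ \<Rightarrow> R | None \<Rightarrow> S)" for j :: "'n option"
    define C where "C = max R S"
    define cl where "cl z = (\<lambda>j. max (- Rv j) (min (Rv j) (z j)))" for z :: "'n option \<Rightarrow> real"
    define G where "G z = F (cl z)" for z
    have c_nonneg: "0 \<le> ((\<Sum>j\<in>UNIV. \<bar>w i j\<bar> * \<beta>) + \<bar>J i\<bar>) / (a i - k)" for i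
      using a_gt_k[of i] beta_pos by (intro divide_nonneg_pos add_nonneg_nonneg sum_nonneg) auto
    have R1: "R \<ge> 1 + \<bar>u0 i\<bar> + ((\<Sum>j\<in>UNIV. \<bar>w i j\<bar> * \<beta>) + \<bar>J i\<bar>) / (a i - k)" for i
    proof -
      have "\<bar>u0 i\<bar> \<le> (\<Sum>i\<in>UNIV. \<bar>u0 i\<bar>)" by (rule member_le_sum) auto
      moreover have "((\<Sum>j\<in>UNIV. \<bar>w i j\<bar> * \<beta>) + \<bar>J i\<bar>) / (a i - k)
          \<le> (\<Sum>i\<in>UNIV. ((\<Sum>j\<in>UNIV. \<bar>w i j\<bar> * \<beta>) + \<bar>J i\<bar>) / (a i - k))"
        by (rule member_le_sum) (use c_nonneg in auto)
      ultimately show ?thesis unfolding R_def by linarith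
    qed
    have Rpos: "R \<ge> 1" using R1[of undefined] c_nonneg[of undefined] by linarith
    have gR: "(\<Sum>i\<in>UNIV. \<bar>\<gamma> i\<bar>) * R \<ge> 0" using Rpos by (intro mult_nonneg_nonneg sum_nonneg) auto
    have bS: "b * S = b + b * \<bar>\<rho>0\<bar> + (\<Sum>i\<in>UNIV. \<bar>\<gamma> i\<bar>) * R"
      unfolding S_def using b_pos by (simp add: field_simps)
    have Spos: "S \<ge> 1" unfolding S_def using gR b_pos by (simp add: divide_nonneg_pos)
    have Sbig: "b * S > (\<Sum>i\<in>UNIV. \<bar>\<gamma> i\<bar>) * R" unfolding bS using b_pos
      by (simp add: add_pos_nonneg)
    have Rbig: "(a i - k) * R > (\<Sum>j\<in>UNIV. \<bar>w i j\<bar> * \<beta>) + \<bar>J i\<bar>" for i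
    proof -
      define c where "c = (\<Sum>j\<in>UNIV. \<bar>w i j\<bar> * \<beta>) + \<bar>J i\<bar>"
      have ak: "a i - k > 0" using a_gt_k[of i] by simp
      have "R \<ge> 1 + c / (a i - k)" using R1[of i] unfolding c_def by simp
      then have "(a i - k) * R \<ge> (a i - k) * (1 + c / (a i - k))" using ak by (intro mult_left_mono) auto
      also have "(a i - k) * (1 + c / (a i - k)) = (a i - k) + c" using ak by (simp add: field_simps)
      finally show ?thesis using ak unfolding c_def by linarith
    qed
    have Rv_pos: "Rv j > 0" for j unfolding Rv_def using Rpos Spos by (cases j) auto
    have Rv_C: "Rv j \<le> C" for j unfolding Rv_def C_def by (cases j) auto
    have cl_box: "\<bar>cl z j\<bar> \<le> Rv j" for z j unfolding cl_def using Rv_pos[of j] by auto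
    have cl_C: "\<forall>l. \<bar>cl z l\<bar> \<le> C" for z using cl_box Rv_C order_trans by blast
    have "\<exists>B L. \<forall>y y' j. (\<forall>l. \<bar>y l\<bar> \<le> C) \<longrightarrow> (\<forall>l. \<bar>y' l\<bar> \<le> C) \<longrightarrow>
          \<bar>F y j\<bar> \<le> B \<and> \<bar>F y j - F y' j\<bar> \<le> L * dd y y'"
      by (rule lipb_all) (rule lipF)
    then obtain B L0 where BL0: "\<forall>y y' j. (\<forall>l. \<bar>y l\<bar> \<le> C) \<longrightarrow> (\<forall>l. \<bar>y' l\<bar> \<le> C) \<longrightarrow>
          \<bar>F y j\<bar> \<le> B \<and> \<bar>F y j - F y' j\<bar> \<le> L0 * dd y y'" by blast
    have BL: "\<And>y y' j. (\<forall>l. \<bar>y l\<bar> \<le> C) \<Longrightarrow> (\<forall>l. \<bar>y' l\<bar> \<le> C) \<Longrightarrow>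
        \<bar>F y j\<bar> \<le> B \<and> \<bar>F y j - F y' j\<bar> \<le> L0 * dd y y'"
      using BL0 by blast
    have Gb: "\<bar>G z i\<bar> \<le> B" for z i unfolding G_def using BL[OF cl_C cl_C] by blast
    have Gl: "\<bar>G z i - G z' i\<bar> \<le> (\<bar>L0\<bar> + 1) * dd z z'" for z z' i
    proof -
      have "\<bar>G z i - G z' i\<bar> \<le> L0 * dd (cl z) (cl z')" unfolding G_def using BL[OF cl_C cl_C] by blast
      also have "\<dots> \<le> (\<bar>L0\<bar> + 1) * dd (cl z) (cl z')" using dd_nonneg by (intro mult_right_mono) auto
      also have "dd (cl z) (cl z') \<le> dd z z'" unfolding dd_def cl_def
        by (rule sum_mono) (rule clamp_lip)
      then have "(\<bar>L0\<bar> + 1) * dd (cl z) (cl z') \<le> (\<bar>L0\<bar> + 1) * dd z z'" by (intro mult_left_mono) auto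
      finally show ?thesis .
    qed
    obtain x where x0: "x 0 = xf0 u0 \<rho>0" and xc: "\<And>j. continuous_on {0..} (\<lambda>t. x t j)"
      and xd: "\<And>t j. t > 0 \<Longrightarrow> ((\<lambda>s. x s j) has_real_derivative G (x t) j) (at t)"
      using picard[of G B "\<bar>L0\<bar> + 1" "xf0 u0 \<rho>0", OF Gb Gl] by force
    have sgn: "(y j = Rv j \<longrightarrow> F y j < 0) \<and> (y j = - Rv j \<longrightarrow> F y j > 0)"
      if yb: "\<forall>l. \<bar>y l\<bar> \<le> Rv l" for y j
    proof (cases j)
      case None
      have "\<And>l. \<bar>y (Some l)\<bar> \<le> R" using yb unfolding Rv_def by (metis option.simps(5))
      note sn = sign_none[where a=a and w=w and f=f and k=k and \<phi>=\<phi> and J=J and P=P and r=r and V=V and \<gamma>=\<gamma> and b=b and y=y and R=R and S=S, OF this Sbig]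
      show ?thesis using None sn unfolding F_def Rv_def by auto
    next
      case (Some i)
      note ss = sign_some[where a=a and w=w and f=f and k=k and \<phi>=\<phi> and J=J and P=P and r=r and V=V and \<gamma>=\<gamma> and b=b and y=y and R=R and i=i and \<eta>=\<eta> and \<beta>=\<beta>, OF a_gt_k k_pos eta_pos P_pos _ f_bdd phi_def Rbig]
      show ?thesis using Some ss Rpos unfolding F_def Rv_def by auto
    qed
    have cl_eq: "cl z = z" if "\<forall>l. \<bar>z l\<bar> \<le> Rv l" for z
    proof
      fix l
      have "\<bar>z l\<bar> \<le> Rv l" using that by blast
      then have "- Rv l \<le> z l" "z l \<le> Rv l" by auto
      then show "cl z l = z l" unfolding cl_def by (simp add: max_def min_def)
    qed
    have x0b: "\<bar>x 0 j\<bar> \<le> Rv j" for j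
    proof (cases j)
      case None then show ?thesis using x0 Spos unfolding xf0_def Rv_def S_def using gR b_pos
        by (simp add: divide_nonneg_pos)
    next
      case (Some i) then show ?thesis using x0 R1[of i] c_nonneg[of i] unfolding xf0_def Rv_def by simp
    qed
    have inv: "\<bar>x t j\<bar> \<le> Rv j" if t: "0 \<le> t" for t j
    proof -
      have up: "x t j \<le> Rv j"
      proof (rule stay_below[OF xc xd _ _ t])
        show "x 0 j \<le> Rv j" using x0b[of j] by simp
        fix s :: real assume "s > 0" "Rv j \<le> x s j"
        then have "cl (x s) j = Rv j" unfolding cl_def using Rv_pos[of j] by simp
        then show "G (x s) j < 0" unfolding G_def using sgn[of "cl (x s)" j] cl_box by auto
      qed
      have lo: "- Rv j \<le> x t j"
      proof (rule stay_above[OF xc xd _ _ t])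
        show "- Rv j \<le> x 0 j" using x0b[of j] by simp
        fix s :: real assume "s > 0" "x s j \<le> - Rv j"
        then have "cl (x s) j = - Rv j" unfolding cl_def using Rv_pos[of j] by simp
        then show "G (x s) j > 0" unfolding G_def using sgn[of "cl (x s)" j] cl_box by auto
      qed
      show ?thesis using up lo by simp
    qed
    have GF: "G (x t) = F (x t)" if "0 \<le> t" for t
      unfolding G_def using cl_eq inv[OF that] by simp
    define u where "u t i = x t (Some i)" for t i
    define \<rho> where "\<rho> t = x t None" for t
    have xu: "xf u \<rho> = x" unfolding xf_def u_def \<rho>_def fun_eq_iff by (simp split: option.splits)
    have "is_global_solution a w f k \<phi> J P r V \<gamma> b u0 \<rho>0 u \<rho>"
      unfolding sol_iff xu F_def[symmetric]
      using x0 xc xd GF by (auto simp: less_imp_le)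
    then show "\<exists>u \<rho>. is_global_solution a w f k \<phi> J P r V \<gamma> b u0 \<rho>0 u \<rho>" by blast
  qed
qed


end
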